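(* Let $n,k$ be integers with $0<k\le n$, and let $f_j(\Delta'_{n,k})$ denote the number of $j$-dimensional faces of the half-open hypersimplex $\Delta'_{n,k}$. Then $f_0(\Delta'_{n,k})=\binom{n}{k}$, and for $j=1,2,\ldots,n$, $$ f_j(\Delta'_{n,k})=\binom{n+1}{j+1}\sum_{s=\max\{0,k-j\}}^{k-1}\binom{n-j}{s}\frac{n-s+1}{n+1}. $$
   Context: For integers $0<k\le n$, the (slab) hypersimplex is $\Delta_{n,k}=\{(x_1,\ldots,x_n)\in[0,1]^n : k-1\le x_1+\cdots+x_n\le k\}$, a convex polytope in $\mathbb{R}^n$, and the half-open hypersimplex is $\Delta'_{n,k}=\{(x_1,\ldots,x_n)\in[0,1]^n : k-1< x_1+\cdots+x_n\le k\}$, i.e. $\Delta_{n,k}$ with its intersection with the hyperplane $x_1+\cdots+x_n=k-1$ removed. A $j$-face of $\Delta'_{n,k}$ is a set $F\cap\Delta'_{n,k}$ where $F$ is a $j$-dimensional face of the polytope $\Delta_{n,k}$ with $F\cap\Delta'_{n,k}\neq\emptyset$; $f_j(\Delta'_{n,k})$ is the number of such faces. Binomial coefficients $\binom{a}{b}$ are $0$ when $b>a$. *)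

theory Defs
  imports "HOL-Analysis.Analysis"
begin

text \<open>The (slab) hypersimplex in R^n, with n = CARD('n).\<close>
definition hypersimplex :: "nat \<Rightarrow> (real ^ 'n) set" where
  "hypersimplex k = {x. (\<forall>i. 0 \<le> x $ i \<and> x $ i \<le> 1) \<and>
      real k - 1 \<le> (\<Sum>i\<in>UNIV. x $ i) \<and> (\<Sum>i\<in>UNIV. x $ i) \<le> real k}"

definition half_open_hypersimplex :: "nat \<Rightarrow> (real ^ 'n) set" where
  "half_open_hypersimplex k = {x. (\<forall>i. 0 \<le> x $ i \<and> x $ i \<le> 1) \<and>
      real k - 1 < (\<Sum>i\<in>UNIV. x $ i) \<and> (\<Sum>i\<in>UNIV. x $ i) \<le> real k}"

definition half_open_faces :: "nat \<Rightarrow> nat \<Rightarrow> (real ^ 'n) set set" where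
  "half_open_faces k j = {F \<inter> half_open_hypersimplex k | F.
      F face_of (hypersimplex k :: (real ^ 'n) set) \<and> aff_dim F = int j \<and>
      F \<inter> half_open_hypersimplex k \<noteq> {}}"

end

theory Submission
  imports Defs
begin


definition Pol :: "('c::finite \<Rightarrow> 'a::euclidean_space) \<Rightarrow> ('c \<Rightarrow> real) \<Rightarrow> 'a set" where
  "Pol a b = {x. \<forall>c. b c \<le> a c \<bullet> x}"
definition faceT :: "('c::finite \<Rightarrow> 'a::euclidean_space) \<Rightarrow> ('c \<Rightarrow> real) \<Rightarrow> 'c set \<Rightarrow> 'a set" where
  "faceT a b T = {x \<in> Pol a b. \<forall>c\<in>T. a c \<bullet> x = b c}"
definition tight :: "('c::finite \<Rightarrow> 'a::euclidean_space) \<Rightarrow> ('c \<Rightarrow> real) \<Rightarrow> 'a set \<Rightarrow> 'c set" where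
  "tight a b X = {c. \<forall>x\<in>X. a c \<bullet> x = b c}"
definition tq :: "('c::finite \<Rightarrow> 'a::euclidean_space) \<Rightarrow> ('c \<Rightarrow> real) \<Rightarrow> 'a \<Rightarrow> 'c set" where
  "tq a b q = {c. a c \<bullet> q = b c}"
definition Lsp :: "('c::finite \<Rightarrow> 'a::euclidean_space) \<Rightarrow> 'c set \<Rightarrow> 'a set" where
  "Lsp a T = {v. \<forall>c\<in>T. a c \<bullet> v = 0}"

lemma perturb:
  assumes q: "q \<in> Pol a b" and v: "\<And>c. c \<in> tq a b q \<Longrightarrow> a c \<bullet> v = 0"
  shows "\<exists>e>0. q + e *\<^sub>R v \<in> faceT a b (tq a b q)"
proof -
  have ev: "\<forall>c\<in>UNIV. eventually (\<lambda>e. b c \<le> a c \<bullet> (q + e *\<^sub>R v) \<and> (c \<in> tq a b q \<longrightarrow> a c \<bullet> (q + e *\<^sub>R v) = b c)) (at_right (0::real))"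
  proof
    fix c
    show "eventually (\<lambda>e. b c \<le> a c \<bullet> (q + e *\<^sub>R v) \<and> (c \<in> tq a b q \<longrightarrow> a c \<bullet> (q + e *\<^sub>R v) = b c)) (at_right (0::real))"
    proof (cases "c \<in> tq a b q")
      case True
      then show ?thesis using v[OF True] by (auto simp: tq_def inner_add_right)
    next
      case False
      then have lt: "b c < a c \<bullet> q" using q by (auto simp: tq_def Pol_def less_le)
      have "((\<lambda>e. a c \<bullet> q + e * (a c \<bullet> v)) \<longlongrightarrow> a c \<bullet> q + 0 * (a c \<bullet> v)) (at_right (0::real))"
        by (intro tendsto_intros)
      then have "((\<lambda>e. a c \<bullet> q + e * (a c \<bullet> v)) \<longlongrightarrow> a c \<bullet> q) (at_right (0::real))" by simp
      from order_tendstoD(1)[OF this lt] show ?thesis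
        by eventually_elim (use False in \<open>auto simp: inner_add_right\<close>)
    qed
  qed
  have "eventually (\<lambda>e. \<forall>c\<in>UNIV. b c \<le> a c \<bullet> (q + e *\<^sub>R v) \<and> (c \<in> tq a b q \<longrightarrow> a c \<bullet> (q + e *\<^sub>R v) = b c)) (at_right (0::real))"
    by (rule eventually_ball_finite[OF _ ev]) simp
  then obtain B where B: "B > 0" "\<And>y. y > 0 \<Longrightarrow> y < B \<Longrightarrow> \<forall>c. b c \<le> a c \<bullet> (q + y *\<^sub>R v) \<and> (c \<in> tq a b q \<longrightarrow> a c \<bullet> (q + y *\<^sub>R v) = b c)"
    unfolding eventually_at_right_field by auto
  have "B/2 > 0" "B/2 < B" using B by auto
  from B(2)[OF this] have "\<forall>c. b c \<le> a c \<bullet> (q + (B/2) *\<^sub>R v) \<and> (c \<in> tq a b q \<longrightarrow> a c \<bullet> (q + (B/2) *\<^sub>R v) = b c)" .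
  then show ?thesis using \<open>B/2>0\<close> unfolding faceT_def Pol_def by blast
qed

lemma faceT_face: "faceT a b T face_of Pol a b"
proof -
  have cP: "convex (Pol a b)"
  proof -
    have "Pol a b = (\<Inter>c. {x. a c \<bullet> x \<ge> b c})" by (auto simp: Pol_def)
    then show ?thesis by (simp add: convex_INT convex_halfspace_ge)
  qed
  have "faceT a b T = \<Inter> (insert (Pol a b) ((\<lambda>c. Pol a b \<inter> {x. a c \<bullet> x = b c}) ` T))"
    by (auto simp: faceT_def)
  also have "\<dots> face_of Pol a b"
  proof (rule face_of_Inter)
    fix S assume "S \<in> insert (Pol a b) ((\<lambda>c. Pol a b \<inter> {x. a c \<bullet> x = b c}) ` T)"
    then show "S face_of Pol a b"
    proof
      assume "S = Pol a b" then show ?thesis using cP by (simp add: face_of_refl)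
    next
      assume "S \<in> (\<lambda>c. Pol a b \<inter> {x. a c \<bullet> x = b c}) ` T"
      then obtain c where "S = Pol a b \<inter> {x. a c \<bullet> x = b c}" by auto
      moreover have "\<And>x. x \<in> Pol a b \<Longrightarrow> a c \<bullet> x \<ge> b c" by (auto simp: Pol_def)
      ultimately show ?thesis using face_of_Int_supporting_hyperplane_ge[OF cP, where a="a c" and b="b c"] by simp
    qed
  qed auto
  finally show ?thesis .
qed

lemma strict_point:
  assumes "convex F" "finite C" "F \<noteq> {}" "\<forall>c\<in>C. \<exists>x\<in>F. b c < a c \<bullet> x"
    "\<forall>x\<in>F. \<forall>c. b c \<le> a c \<bullet> x"
  shows "\<exists>q\<in>F. \<forall>c\<in>C. b c < a c \<bullet> q"
  using assms(2,4)
proof (induction C rule: finite_induct)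
  case empty then show ?case using assms(3) by auto
next
  case (insert d C)
  then obtain q where q: "q \<in> F" "\<forall>c\<in>C. b c < a c \<bullet> q" by auto
  obtain x where x: "x \<in> F" "b d < a d \<bullet> x" using insert.prems by auto
  let ?m = "(1/2) *\<^sub>R q + (1/2) *\<^sub>R x"
  have "?m \<in> F" using assms(1) q x by (intro convexD) auto
  moreover have "\<forall>c\<in>insert d C. b c < a c \<bullet> ?m"
  proof
    fix c assume "c \<in> insert d C"
    moreover have "b c \<le> a c \<bullet> q" "b c \<le> a c \<bullet> x" using assms(5) q x by auto
    ultimately show "b c < a c \<bullet> ?m" using q x by (auto simp: inner_add_right)
  qed
  ultimately show ?case by blast
qed

lemma face_char:
  assumes F: "F face_of Pol a b" "F \<noteq> {}"
  shows "\<exists>q\<in>F. tight a b F = tq a b q \<and> F = faceT a b (tq a b q)"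
proof -
  have sub: "F \<subseteq> Pol a b" using F face_of_imp_subset by blast
  have "\<exists>q\<in>F. \<forall>c\<in>- tight a b F. b c < a c \<bullet> q"
  proof (rule strict_point)
    show "convex F" using F face_of_imp_convex by blast
    show "\<forall>c\<in>- tight a b F. \<exists>x\<in>F. b c < a c \<bullet> x"
      using sub by (force simp: tight_def Pol_def less_le)
    show "\<forall>x\<in>F. \<forall>c. b c \<le> a c \<bullet> x" using sub by (auto simp: Pol_def)
  qed (use F in auto)
  then obtain q where q: "q \<in> F" "\<And>c. c \<notin> tight a b F \<Longrightarrow> b c < a c \<bullet> q" by auto
  have T: "tight a b F = tq a b q"
    using q by (fastforce simp: tight_def tq_def)
  have "F = faceT a b (tq a b q)"
  proof
    show "F \<subseteq> faceT a b (tq a b q)" using sub T by (auto simp: faceT_def tight_def)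
  next
    show "faceT a b (tq a b q) \<subseteq> F"
    proof
      fix y assume y: "y \<in> faceT a b (tq a b q)"
      show "y \<in> F"
      proof (cases "y = q")
        case True then show ?thesis using q by simp
      next
        case False
        have qP: "q \<in> Pol a b" using sub q by auto
        have "\<And>c. c \<in> tq a b q \<Longrightarrow> a c \<bullet> (q - y) = 0"
          using y by (auto simp: tq_def faceT_def inner_diff_right)
        from perturb[OF qP this] obtain e where e: "e > 0" "q + e *\<^sub>R (q - y) \<in> faceT a b (tq a b q)"
          by blast
        let ?z = "q + e *\<^sub>R (q - y)"
        have zP: "?z \<in> Pol a b" using e by (auto simp: faceT_def)
        have yP: "y \<in> Pol a b" using y by (auto simp: faceT_def)
        have "q \<in> open_segment y ?z"
          unfolding in_segment
        proof
          show "y \<noteq> ?z"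
          proof
            assume "y = ?z"
            then have "(1 + e) *\<^sub>R (q - y) = 0" by (simp add: algebra_simps)
            then show False using e False by simp
          qed
          show "\<exists>u>0. u < 1 \<and> q = (1 - u) *\<^sub>R y + u *\<^sub>R ?z"
          proof (intro exI conjI)
            show "1/(1+e) > 0" "1/(1+e) < 1" using e by auto
            define u where "u = 1/(1+e)"
            have u1: "u + u*e = 1" using e by (simp add: u_def field_simps)
            have "(1 - u) *\<^sub>R y + u *\<^sub>R ?z = (1 - (u + u*e)) *\<^sub>R y + (u + u*e) *\<^sub>R q"
              by (simp add: algebra_simps)
            also have "\<dots> = q" using u1 by simp
            finally show "q = (1 - 1/(1+e)) *\<^sub>R y + (1/(1+e)) *\<^sub>R ?z" by (simp add: u_def)
          qed
        qed
        from face_ofD[OF F(1) this yP zP q(1)] show ?thesis by blast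
      qed
    qed
  qed
  with q T show ?thesis by blast
qed

lemma subspace_Lsp: "subspace (Lsp a T)"
  by (auto simp: subspace_def Lsp_def inner_add_right)

lemma aff_dim_faceT:
  assumes q: "q \<in> Pol a b"
  shows "aff_dim (faceT a b (tq a b q)) = int (dim (Lsp a (tq a b q)))"
proof -
  let ?S = "faceT a b (tq a b q)"
  have qS: "q \<in> ?S" using q by (auto simp: faceT_def tq_def)
  then have "q \<in> affine hull ?S" by (simp add: hull_inc)
  from aff_dim_eq_dim[OF this] have 1: "aff_dim ?S = int (dim ((+) (- q) ` ?S))" .
  have "span ((+) (- q) ` ?S) = Lsp a (tq a b q)"
  proof
    have "(+) (- q) ` ?S \<subseteq> Lsp a (tq a b q)"
      by (auto simp: Lsp_def faceT_def tq_def inner_add_right inner_diff_right)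
    then show "span ((+) (- q) ` ?S) \<subseteq> Lsp a (tq a b q)"
      using subspace_Lsp by (metis span_minimal)
  next
    show "Lsp a (tq a b q) \<subseteq> span ((+) (- q) ` ?S)"
    proof
      fix v assume v: "v \<in> Lsp a (tq a b q)"
      from perturb[OF q, of v] v obtain e where e: "e > 0" "q + e *\<^sub>R v \<in> ?S"
        by (auto simp: Lsp_def)
      then have "e *\<^sub>R v \<in> (+) (- q) ` ?S" by (force intro: image_eqI[where x="q + e *\<^sub>R v"])
      then have "(1/e) *\<^sub>R (e *\<^sub>R v) \<in> span ((+) (- q) ` ?S)"
        by (intro span_mul span_base)
      then show "v \<in> span ((+) (- q) ` ?S)" using e by simp
    qed
  qed
  then have "dim ((+) (- q) ` ?S) = dim (Lsp a (tq a b q))"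
    by (metis dim_span)
  with 1 show ?thesis by simp
qed



definition ca :: "'n::finite + 'n + bool \<Rightarrow> real^'n" where
  "ca c = (case c of Inl i \<Rightarrow> axis i 1 | Inr (Inl i) \<Rightarrow> - axis i 1
     | Inr (Inr True) \<Rightarrow> (\<chi> i. 1) | Inr (Inr False) \<Rightarrow> - (\<chi> i. 1))"
definition cb :: "nat \<Rightarrow> 'n::finite + 'n + bool \<Rightarrow> real" where
  "cb k c = (case c of Inl i \<Rightarrow> 0 | Inr (Inl i) \<Rightarrow> -1
     | Inr (Inr True) \<Rightarrow> real k - 1 | Inr (Inr False) \<Rightarrow> - real k)"

lemma all_c: "(\<forall>c::'n+'n+bool. P c) \<longleftrightarrow> (\<forall>i. P (Inl i)) \<and> (\<forall>i. P (Inr (Inl i))) \<and> P (Inr (Inr True)) \<and> P (Inr (Inr False))"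
proof (intro iffI allI)
  fix c :: "'n+'n+bool"
  assume h: "(\<forall>i. P (Inl i)) \<and> (\<forall>i. P (Inr (Inl i))) \<and> P (Inr (Inr True)) \<and> P (Inr (Inr False))"
  show "P c"
  proof (cases c)
    case (Inl i) then show ?thesis using h by simp
  next
    case (Inr d) then show ?thesis using h by (cases d) (auto, metis (full_types))
  qed
qed auto

lemma ca_simps1[simp]:
  "ca (Inl i) \<bullet> x = x $ i" "ca (Inr (Inl i)) \<bullet> x = - x $ i"
  by (simp_all add: ca_def inner_axis')
lemma ca_simps[simp]:
  "ca (Inr (Inr True)) \<bullet> x = (\<Sum>i\<in>UNIV. x $ i)" "ca (Inr (Inr False)) \<bullet> x = - (\<Sum>i\<in>UNIV. x $ i)"
  by (simp_all add: ca_def inner_axis' inner_vec_def sum_negf)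

lemma cb_simps[simp]:
  "cb k (Inl i) = 0" "cb k (Inr (Inl i)) = -1"
  "cb k (Inr (Inr True)) = real k - 1" "cb k (Inr (Inr False)) = - real k"
  by (auto simp: cb_def)

lemma hyp_Pol: "hypersimplex k = Pol ca (cb k)"
  unfolding hypersimplex_def Pol_def all_c by auto

lemma half_Pol: "half_open_hypersimplex k = {x \<in> Pol ca (cb k). Inr (Inr True) \<notin> tq ca (cb k) x}"
  unfolding half_open_hypersimplex_def Pol_def tq_def all_c by (auto simp: less_le)

definition Tof :: "'n::finite set \<Rightarrow> 'n set \<Rightarrow> bool \<Rightarrow> ('n + 'n + bool) set" where
  "Tof A U s = Inl ` (- (A \<union> U)) \<union> Inr ` Inl ` A \<union> (if s then {Inr (Inr False)} else {})"

definition pO :: "real^'n::finite \<Rightarrow> 'n set" where "pO q = {i. q $ i = 1}"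
definition pU :: "real^'n::finite \<Rightarrow> 'n set" where "pU q = {i. 0 < q $ i \<and> q $ i < 1}"
definition pS :: "nat \<Rightarrow> real^'n::finite \<Rightarrow> bool" where "pS k q = ((\<Sum>i\<in>UNIV. q $ i) = real k)"

definition valid :: "nat \<Rightarrow> 'n::finite set \<Rightarrow> 'n set \<Rightarrow> bool \<Rightarrow> bool" where
  "valid k A U s = (A \<inter> U = {} \<and> (if s then ((U = {} \<and> card A = k) \<or> (card A < k \<and> k < card A + card U))
      else (U \<noteq> {} \<and> card A < k \<and> k \<le> card A + card U)))"

definition dimf :: "'n::finite set \<Rightarrow> bool \<Rightarrow> nat" where
  "dimf U s = (if s then card U - 1 else card U)"

lemma PolD: "q \<in> Pol ca (cb k) \<Longrightarrow> 0 \<le> q $ i \<and> q $ i \<le> 1 \<and> real k - 1 \<le> (\<Sum>i\<in>UNIV. q $ i) \<and> (\<Sum>i\<in>UNIV. q $ i) \<le> real k"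
  unfolding Pol_def all_c by auto

lemma tq_pattern:
  assumes q: "q \<in> Pol ca (cb k)" and nl: "Inr (Inr True) \<notin> tq ca (cb k) q"
  shows "tq ca (cb k) q = Tof (pO q) (pU q) (pS k q)"
proof -
  have b: "\<And>i. 0 \<le> q $ i \<and> q $ i \<le> 1" using PolD[OF q] by blast
  show ?thesis
  proof (rule set_eqI)
    fix c :: "'a + 'a + bool"
    show "c \<in> tq ca (cb k) q \<longleftrightarrow> c \<in> Tof (pO q) (pU q) (pS k q)"
    proof (cases c)
      case (Inl i) then show ?thesis using b[of i] by (auto simp: tq_def Tof_def pO_def pU_def less_le)
    next
      case (Inr d)
      show ?thesis
      proof (cases d)
        case (Inl i) then show ?thesis using Inr by (auto simp: tq_def Tof_def pO_def pU_def)
      next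
        case (Inr t) then show ?thesis using \<open>c = Inr d\<close> nl by (cases t) (auto simp: tq_def Tof_def pS_def)
      qed
    qed
  qed
qed

lemma sumI1: "(\<Sum>i\<in>(UNIV::'a::finite set). if i \<in> A then 1 else 0) = real (card A)"
  by (subst sum.inter_filter[symmetric]) auto
lemma sumI2: "(\<Sum>i\<in>(UNIV::'a::finite set). if i \<in> A then (q::real^'a) $ i else 0) = (\<Sum>i\<in>A. q $ i)"
  by (subst sum.inter_filter[symmetric]) auto

lemma sum_pattern:
  assumes q: "q \<in> Pol ca (cb k)"
  shows "(\<Sum>i\<in>UNIV. q $ i) = real (card (pO q)) + (\<Sum>i\<in>pU q. q $ i)"
proof -
  have b: "\<And>i. 0 \<le> q $ i \<and> q $ i \<le> 1" using PolD[OF q] by blast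
  have "(\<Sum>i\<in>UNIV. q $ i) = (\<Sum>i\<in>UNIV. (if i \<in> pO q then 1 else 0) + (if i \<in> pU q then q $ i else 0))"
  proof (rule sum.cong)
    fix i :: 'a
    show "q $ i = (if i \<in> pO q then 1 else 0) + (if i \<in> pU q then q $ i else 0)"
      using b[of i] by (auto simp: pO_def pU_def less_le)
  qed simp
  also have "\<dots> = real (card (pO q)) + (\<Sum>i\<in>pU q. q $ i)"
      by (simp add: sum.distrib sumI1 sumI2)
  finally show ?thesis .
qed

lemma valid_pattern:
  assumes q: "q \<in> Pol ca (cb k)" and nl: "Inr (Inr True) \<notin> tq ca (cb k) q"
  shows "valid k (pO q) (pU q) (pS k q)"
proof -
  let ?o = "card (pO q)" and ?u = "card (pU q)" and ?s = "\<Sum>i\<in>pU q. q $ i"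
  have S: "(\<Sum>i\<in>UNIV. q $ i) = real ?o + ?s" by (rule sum_pattern[OF q])
  have B: "real k - 1 \<le> (\<Sum>i\<in>UNIV. q $ i)" "(\<Sum>i\<in>UNIV. q $ i) \<le> real k" using PolD[OF q] by auto
  have N: "(\<Sum>i\<in>UNIV. q $ i) \<noteq> real k - 1" using nl by (auto simp: tq_def)
  have disj: "pO q \<inter> pU q = {}" by (auto simp: pO_def pU_def)
  have e0: "pU q = {} \<Longrightarrow> ?s = 0" by simp
  have pos: "pU q \<noteq> {} \<Longrightarrow> 0 < ?s" by (rule sum_pos) (auto simp: pU_def)
  have lt: "pU q \<noteq> {} \<Longrightarrow> ?s < real ?u"
  proof -
    assume ne: "pU q \<noteq> {}"
    have "?s < (\<Sum>i\<in>pU q. 1)" by (rule sum_strict_mono) (use ne in \<open>auto simp: pU_def\<close>)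
    then show ?thesis by simp
  qed
  show ?thesis
  proof (cases "pS k q")
    case True
    then have Sk: "real ?o + ?s = real k" using S by (simp add: pS_def)
    show ?thesis
    proof (cases "pU q = {}")
      case True then show ?thesis using Sk e0 disj \<open>pS k q\<close> by (simp add: valid_def)
    next
      case False
      have "real ?o < real k" "real k < real ?o + real ?u" using Sk pos[OF False] lt[OF False] by linarith+
      then have "?o < k" "k < ?o + ?u" by linarith+
      then show ?thesis using disj \<open>pS k q\<close> by (simp add: valid_def)
    qed
  next
    case False
    then have Sk: "real k - 1 < real ?o + ?s" "real ?o + ?s < real k" using S B N by (auto simp: pS_def)
    have ne: "pU q \<noteq> {}"
    proof
      assume "pU q = {}"
      then have "real k < real (?o + 1)" "real ?o < real k" using Sk by simp_all
      then have "k < ?o + 1" "?o < k" by (simp only: of_nat_less_iff)+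
      then show False by simp
    qed
    have "real ?o < real k" "real k < real (?o + ?u + 1)" using Sk pos[OF ne] lt[OF ne] by simp_all
    then have "?o < k" "k < ?o + ?u + 1" by (simp only: of_nat_less_iff)+
    then show ?thesis using disj ne False by (simp add: valid_def)
  qed
qed

definition pt :: "nat \<Rightarrow> 'n::finite set \<Rightarrow> 'n set \<Rightarrow> bool \<Rightarrow> real^'n" where
  "pt k A U s = (\<chi> i. if i \<in> A then 1 else if i \<in> U then
      (real k - real (card A) - (if s then 0 else 1/2)) / real (card U) else 0)"

lemma pt_props:
  assumes v: "valid k A U s"
  shows "pt k A U s \<in> Pol ca (cb k)" "Inr (Inr True) \<notin> tq ca (cb k) (pt k A U s)"
    "pO (pt k A U s) = A" "pU (pt k A U s) = U" "pS k (pt k A U s) = s"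
proof -
  define t where "t = (real k - real (card A) - (if s then 0 else 1/2)) / real (card U)"
  have disj: "A \<inter> U = {}" using v by (simp add: valid_def)
  have pti: "\<And>i. pt k A U s $ i = (if i \<in> A then 1 else if i \<in> U then t else 0)"
    by (simp add: pt_def t_def)
  have t01: "U \<noteq> {} \<Longrightarrow> 0 < t \<and> t < 1"
  proof -
    assume ne: "U \<noteq> {}"
    then have cu: "real (card U) > 0" by (simp add: card_gt_0_iff)
    have "0 < real k - real (card A) - (if s then 0 else 1/2) \<and> real k - real (card A) - (if s then 0 else 1/2) < real (card U)"
    proof (cases s)
      case True
      then have "card A < k" "k < card A + card U" using v ne by (auto simp: valid_def)
      then have "real (card A) < real k" "real k < real (card A) + real (card U)" by linarith+
      then show ?thesis using True by simp
    next
      case False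
      then have "card A < k" "k \<le> card A + card U" using v by (auto simp: valid_def)
      then have "real (card A) + 1 \<le> real k" "real k \<le> real (card A) + real (card U)" by linarith+
      then show ?thesis using False by simp
    qed
    then show "0 < t \<and> t < 1" using cu by (simp add: t_def field_simps)
  qed
  have sum: "(\<Sum>i\<in>UNIV. pt k A U s $ i) = (if s then real k else real k - 1/2)"
  proof -
    have "(\<Sum>i\<in>UNIV. pt k A U s $ i) = (\<Sum>i\<in>UNIV. (if i \<in> A then 1 else 0) + (if i \<in> U then t else 0))"
      by (rule sum.cong) (use disj in \<open>auto simp: pti\<close>)
    also have "\<dots> = real (card A) + real (card U) * t"
      by (simp add: sum.distrib sumI1 sum.inter_filter[symmetric])
    also have "\<dots> = (if s then real k else real k - 1/2)"
    proof (cases "U = {}")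
      case True
      then have "s" "card A = k" using v by (auto simp: valid_def split: if_splits)
      then show ?thesis using True by simp
    next
      case False
      then have "real (card U) \<noteq> 0" by simp
      then show ?thesis by (simp add: t_def)
    qed
    finally show ?thesis .
  qed
  have t01': "\<forall>i\<in>U. 0 < t \<and> t < 1" using t01 by blast
  have coord: "\<And>i. 0 \<le> pt k A U s $ i \<and> pt k A U s $ i \<le> 1"
    using t01' by (auto simp: pti)
  show "pt k A U s \<in> Pol ca (cb k)" unfolding Pol_def all_c using coord sum by auto
  show "Inr (Inr True) \<notin> tq ca (cb k) (pt k A U s)" using sum by (auto simp: tq_def)
  show "pO (pt k A U s) = A" using t01 disj by (auto simp: pO_def pti)
  show "pU (pt k A U s) = U" using t01 disj by (auto simp: pU_def pti)
  show "pS k (pt k A U s) = s" using sum by (auto simp: pS_def)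
qed

lemma Lsp_Tof: fixes A U :: "'n::finite set" assumes "A \<inter> U = {}"
  shows "Lsp ca (Tof A U s) = {v::real^'n. (\<forall>i. i \<notin> U \<longrightarrow> v $ i = 0) \<and> (s \<longrightarrow> (\<Sum>i\<in>UNIV. v $ i) = 0)}"
proof (rule set_eqI, rule iffI)
  fix v assume v: "v \<in> Lsp ca (Tof A U s)"
  have 1: "\<And>i. i \<notin> A \<Longrightarrow> i \<notin> U \<Longrightarrow> v $ i = 0"
  proof -
    fix i assume "i \<notin> A" "i \<notin> U"
    then have "Inl i \<in> Tof A U s" by (auto simp: Tof_def)
    then show "v $ i = 0" using v by (force simp: Lsp_def)
  qed
  have 2: "\<And>i. i \<in> A \<Longrightarrow> v $ i = 0"
  proof -
    fix i assume "i \<in> A"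
    then have "Inr (Inl i) \<in> Tof A U s" by (auto simp: Tof_def)
    then show "v $ i = 0" using v by (force simp: Lsp_def)
  qed
  have 3: "s \<Longrightarrow> (\<Sum>i\<in>UNIV. v $ i) = 0"
  proof -
    assume s
    then have "Inr (Inr False) \<in> Tof A U s" by (auto simp: Tof_def)
    then show ?thesis using v by (force simp: Lsp_def)
  qed
  show "v \<in> {v::real^'n. (\<forall>i. i \<notin> U \<longrightarrow> v $ i = 0) \<and> (s \<longrightarrow> (\<Sum>i\<in>UNIV. v $ i) = 0)}"
    using 1 2 3 by blast
next
  fix v assume "v \<in> {v::real^'n. (\<forall>i. i \<notin> U \<longrightarrow> v $ i = 0) \<and> (s \<longrightarrow> (\<Sum>i\<in>UNIV. v $ i) = 0)}"
  then show "v \<in> Lsp ca (Tof A U s)" using assms by (auto simp: Lsp_def Tof_def)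
qed

lemma dim_L0: "dim {v::real^'n::finite. \<forall>i. i \<notin> U \<longrightarrow> v $ i = 0} = card U"
proof -
  have "vec.dim {v::real^'n. \<forall>i. i \<notin> U \<longrightarrow> v $ i = 0} = card U" by (rule dim_substandard_cart)
  then show ?thesis by (simp only: dim_vec_eq)
qed

lemma dim_Tof: assumes disj: "A \<inter> U = {}" shows "dim (Lsp ca (Tof A U s)) = dimf U s"
proof (cases s)
  case False then show ?thesis by (simp add: Lsp_Tof[OF disj] dim_L0 dimf_def)
next
  case True
  define L0 where "L0 = {v::real^'a. \<forall>i. i \<notin> U \<longrightarrow> v $ i = 0}"
  define L where "L = {v::real^'a. (\<forall>i. i \<notin> U \<longrightarrow> v $ i = 0) \<and> (\<Sum>i\<in>UNIV. v $ i) = 0}"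
  have LL: "Lsp ca (Tof A U s) = L" using True by (simp add: Lsp_Tof[OF disj] L_def)
  show ?thesis
  proof (cases "U = {}")
    case True
    then have "L = L0" by (auto simp: L_def L0_def)
    then show ?thesis using LL True \<open>s\<close> dim_L0[of U] by (simp add: dimf_def L0_def)
  next
    case False
    then obtain u where u: "u \<in> U" by blast
    let ?e = "axis u 1 :: real^'a"
    have sL0: "subspace L0" by (auto simp: subspace_def L0_def)
    have sL: "subspace L" by (auto simp: subspace_def L_def sum.distrib sum_distrib_left[symmetric])
    have eL0: "?e \<in> L0" using u by (auto simp: L0_def axis_def)
    have se: "(\<Sum>i\<in>UNIV. ?e $ i) = 1" by (simp add: axis_def)
    have eL: "?e \<notin> L" using se by (auto simp: L_def)
    have e1: "span L = L" "span L0 = L0" using sL sL0 by (simp_all add: span_eq_iff)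
    have "L \<subset> L0" using eL eL0 by (auto simp: L_def L0_def)
    then have "span L \<subset> span L0" unfolding e1 .
    then have lt: "dim L < card U" using dim_psubset dim_L0[of U] by (metis L0_def)
    have "L0 \<subseteq> span (insert ?e L)"
    proof
      fix v assume v: "v \<in> L0"
      let ?c = "\<Sum>i\<in>UNIV. v $ i"
      have "v - ?c *\<^sub>R ?e \<in> L"
        using v u se by (auto simp: L_def L0_def sum_subtractf sum_distrib_left[symmetric] axis_def)
      then have "(v - ?c *\<^sub>R ?e) + ?c *\<^sub>R ?e \<in> span (insert ?e L)"
        by (intro span_add span_mul span_base) auto
      then show "v \<in> span (insert ?e L)" by simp
    qed
    then have "dim L0 \<le> dim (insert ?e L)" by (rule dim_mono)
    also have "\<dots> \<le> dim L + 1" by (simp add: dim_insert)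
    finally have "card U \<le> dim L + 1" using dim_L0[of U] by (simp add: L0_def)
    with lt show ?thesis using LL True by (simp add: dimf_def)
  qed
qed



definition Vj :: "nat \<Rightarrow> nat \<Rightarrow> ('n::finite set \<times> 'n set \<times> bool) set" where
  "Vj k j = {(A,U,s). valid k A U s \<and> dimf U s = j}"

lemma Tof_inj:
  assumes "A1 \<inter> U1 = {}" "A2 \<inter> U2 = {}" "Tof A1 U1 s1 = Tof A2 U2 s2"
  shows "A1 = A2 \<and> U1 = U2 \<and> s1 = s2"
proof -
  have a: "\<And>A U s. A = {i. Inr (Inl i) \<in> Tof A U s}" by (auto simp: Tof_def)
  have s: "\<And>A U s. s = (Inr (Inr False) \<in> Tof A U s)" by (auto simp: Tof_def)
  have u: "\<And>A U s. A \<inter> U = {} \<Longrightarrow> U = {i. Inl i \<notin> Tof A U s \<and> Inr (Inl i) \<notin> Tof A U s}"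
    by (auto simp: Tof_def)
  have 1: "A1 = A2"
  proof -
    have "A1 = {i. Inr (Inl i) \<in> Tof A1 U1 s1}" by (rule a)
    also have "\<dots> = {i. Inr (Inl i) \<in> Tof A2 U2 s2}" using assms(3) by simp
    also have "\<dots> = A2" by (rule a[symmetric])
    finally show ?thesis .
  qed
  have 2: "s1 = s2"
  proof -
    have "s1 = (Inr (Inr False) \<in> Tof A1 U1 s1)" by (rule s)
    also have "\<dots> = (Inr (Inr False) \<in> Tof A2 U2 s2)" using assms(3) by simp
    also have "\<dots> = s2" by (rule s[symmetric])
    finally show ?thesis .
  qed
  have 3: "U1 = U2"
  proof -
    have "U1 = {i. Inl i \<notin> Tof A1 U1 s1 \<and> Inr (Inl i) \<notin> Tof A1 U1 s1}" by (rule u[OF assms(1)])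
    also have "\<dots> = {i. Inl i \<notin> Tof A2 U2 s2 \<and> Inr (Inl i) \<notin> Tof A2 U2 s2}" using assms(3) by simp
    also have "\<dots> = U2" by (rule u[OF assms(2), symmetric])
    finally show ?thesis .
  qed
  show ?thesis using 1 2 3 by blast
qed

lemma tight_sub:
  assumes "q \<in> X" "X \<subseteq> faceT a b (tq a b q)"
  shows "tight a b X = tq a b q"
  using assms by (fastforce simp: tight_def tq_def faceT_def)

lemma faces_eq:
  fixes k j :: nat
  shows "(half_open_faces k j :: (real^'n::finite) set set) =
     (\<lambda>(A,U,s). faceT ca (cb k) (Tof A U s) \<inter> half_open_hypersimplex k) ` (Vj k j :: ('n set \<times> 'n set \<times> bool) set)"
proof (rule set_eqI, rule iffI)
  fix G :: "(real^'n) set"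
  assume "G \<in> half_open_faces k j"
  then obtain F where F: "F face_of Pol ca (cb k)" "aff_dim F = int j" "F \<inter> half_open_hypersimplex k \<noteq> {}"
    and G: "G = F \<inter> half_open_hypersimplex k"
    unfolding half_open_faces_def hyp_Pol by blast
  have "F \<noteq> {}" using F(3) by blast
  from face_char[OF F(1) this] obtain q where q: "q \<in> F" "tight ca (cb k) F = tq ca (cb k) q"
    "F = faceT ca (cb k) (tq ca (cb k) q)" by blast
  have qP: "q \<in> Pol ca (cb k)" using q F(1) face_of_imp_subset by blast
  have nl: "Inr (Inr True) \<notin> tq ca (cb k) q"
  proof
    assume "Inr (Inr True) \<in> tq ca (cb k) q"
    then have "Inr (Inr True) \<in> tight ca (cb k) F" using q by simp
    then show False using F(3) unfolding half_Pol tight_def tq_def by auto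
  qed
  have T: "tq ca (cb k) q = Tof (pO q) (pU q) (pS k q)" by (rule tq_pattern[OF qP nl])
  have v: "valid k (pO q) (pU q) (pS k q)" by (rule valid_pattern[OF qP nl])
  then have disj: "pO q \<inter> pU q = {}" by (simp add: valid_def)
  have "int j = int (dim (Lsp ca (tq ca (cb k) q)))" using F(2) q(3) aff_dim_faceT[OF qP] by simp
  then have "j = dimf (pU q) (pS k q)" using T dim_Tof[OF disj] by simp
  then have "(pO q, pU q, pS k q) \<in> Vj k j" using v by (simp add: Vj_def)
  moreover have "G = (\<lambda>(A,U,s). faceT ca (cb k) (Tof A U s) \<inter> half_open_hypersimplex k) (pO q, pU q, pS k q)"
    using G q(3) T by simp
  ultimately show "G \<in> (\<lambda>(A,U,s). faceT ca (cb k) (Tof A U s) \<inter> half_open_hypersimplex k) ` Vj k j" by blast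
next
  fix G :: "(real^'n) set"
  assume "G \<in> (\<lambda>(A,U,s). faceT ca (cb k) (Tof A U s) \<inter> half_open_hypersimplex k) ` Vj k j"
  then obtain A U s where t: "(A,U,s) \<in> Vj k j" and G: "G = faceT ca (cb k) (Tof A U s) \<inter> half_open_hypersimplex k"
    by auto
  have v: "valid k A U s" and dj: "dimf U s = j" using t by (auto simp: Vj_def)
  then have disj: "A \<inter> U = {}" by (simp add: valid_def)
  let ?q = "pt k A U s"
  note pp = pt_props[OF v]
  have T: "tq ca (cb k) ?q = Tof A U s" using tq_pattern[OF pp(1) pp(2)] pp(3-5) by simp
  have f: "faceT ca (cb k) (Tof A U s) face_of hypersimplex k" using faceT_face hyp_Pol by metis
  have ad: "aff_dim (faceT ca (cb k) (Tof A U s)) = int j"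
    using aff_dim_faceT[OF pp(1)] T dim_Tof[OF disj] dj by simp
  have "?q \<in> faceT ca (cb k) (Tof A U s)" using pp(1) T by (auto simp: faceT_def tq_def)
  moreover have "?q \<in> half_open_hypersimplex k" using pp(1,2) by (simp add: half_Pol)
  ultimately have "faceT ca (cb k) (Tof A U s) \<inter> half_open_hypersimplex k \<noteq> {}" by blast
  then show "G \<in> half_open_faces k j" unfolding half_open_faces_def using f ad G by blast
qed

lemma key_tight:
  fixes A U :: "'n::finite set"
  assumes v: "valid k A U s"
  shows "tight ca (cb k) (faceT ca (cb k) (Tof A U s) \<inter> (half_open_hypersimplex k :: (real^'n) set)) = Tof A U s"
proof -
  note pp = pt_props[OF v]
  have T: "tq ca (cb k) (pt k A U s) = Tof A U s" using tq_pattern[OF pp(1) pp(2)] pp(3-5) by simp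
  have 1: "pt k A U s \<in> faceT ca (cb k) (Tof A U s) \<inter> (half_open_hypersimplex k :: (real^'n) set)"
    using pp(1,2) T by (auto simp: faceT_def tq_def half_Pol)
  have 2: "faceT ca (cb k) (Tof A U s) \<inter> (half_open_hypersimplex k :: (real^'n) set) \<subseteq> faceT ca (cb k) (tq ca (cb k) (pt k A U s))"
    unfolding T by blast
  from tight_sub[OF 1 2] T show ?thesis by simp
qed

lemma faces_card:
  "card (half_open_faces k j :: (real^'n::finite) set set) = card (Vj k j :: ('n set \<times> 'n set \<times> bool) set)"
proof -
  have "inj_on (\<lambda>(A,U,s). faceT ca (cb k) (Tof A U s) \<inter> (half_open_hypersimplex k :: (real^'n) set)) (Vj k j :: ('n set \<times> 'n set \<times> bool) set)"
  proof (rule inj_onI)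
    fix x y :: "'n set \<times> 'n set \<times> bool"
    assume x: "x \<in> Vj k j" and y: "y \<in> Vj k j"
      and e0: "(\<lambda>(A,U,s). faceT ca (cb k) (Tof A U s) \<inter> (half_open_hypersimplex k :: (real^'n) set)) x =
               (\<lambda>(A,U,s). faceT ca (cb k) (Tof A U s) \<inter> (half_open_hypersimplex k :: (real^'n) set)) y"
    obtain A1 U1 s1 where x1: "x = (A1,U1,s1)" by (cases x) auto
    obtain A2 U2 s2 where y1: "y = (A2,U2,s2)" by (cases y) auto
    have e: "faceT ca (cb k) (Tof A1 U1 s1) \<inter> (half_open_hypersimplex k :: (real^'n) set) = faceT ca (cb k) (Tof A2 U2 s2) \<inter> (half_open_hypersimplex k :: (real^'n) set)"
      using e0 x1 y1 by simp
    have v1: "valid k A1 U1 s1" and v2: "valid k A2 U2 s2" using x y x1 y1 by (auto simp: Vj_def)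
    from arg_cong[OF e, of "tight ca (cb k)"]
    have "Tof A1 U1 s1 = Tof A2 U2 s2" unfolding key_tight[OF v1] key_tight[OF v2] .
    moreover have "A1 \<inter> U1 = {}" "A2 \<inter> U2 = {}" using v1 v2 by (simp_all add: valid_def)
    ultimately show "x = y" using Tof_inj x1 y1 by blast
  qed
  then show ?thesis unfolding faces_eq by (rule card_image)
qed



lemma card_pairs:
  "card {(A::'n::finite set, U::'n set). A \<inter> U = {} \<and> card U = u \<and> card A = m}
     = (CARD('n) choose u) * ((CARD('n) - u) choose m)"
proof -
  have eq: "{(A::'n::finite set, U::'n set). A \<inter> U = {} \<and> card U = u \<and> card A = m}
      = (\<lambda>(U,A). (A,U)) ` (SIGMA U:{U. card U = u}. {A. A \<subseteq> - U \<and> card A = m})"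
    by (auto simp: image_iff)
  have inj: "inj_on (\<lambda>(U::'n set,A::'n set). (A,U)) X" for X by (auto simp: inj_on_def)
  have "card (SIGMA U:{U::'n set. card U = u}. {A. A \<subseteq> - U \<and> card A = m})
      = (\<Sum>U\<in>{U::'n set. card U = u}. card {A. A \<subseteq> - U \<and> card A = m})"
    by (rule card_SigmaI) auto
  also have "\<dots> = (\<Sum>U\<in>{U::'n set. card U = u}. (CARD('n) - u) choose m)"
  proof (rule sum.cong)
    fix U :: "'n set" assume "U \<in> {U. card U = u}"
    then have "card (- U) = CARD('n) - u" by (simp add: Compl_eq_Diff_UNIV card_Diff_subset)
    then show "card {A. A \<subseteq> - U \<and> card A = m} = (CARD('n) - u) choose m"
      using n_subsets[of "- U" m] by simp
  qed simp
  also have "\<dots> = card {U::'n set. card U = u} * ((CARD('n) - u) choose m)" by simp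
  also have "card {U::'n set. card U = u} = CARD('n) choose u"
    using n_subsets[of "UNIV::'n set" u] by simp
  finally show ?thesis unfolding eq by (simp add: card_image[OF inj])
qed

definition Pp :: "nat \<Rightarrow> nat \<Rightarrow> ('n::finite set \<times> 'n set) set" where
  "Pp u m = {(A,U). A \<inter> U = {} \<and> card U = u \<and> card A = m}"

lemma card_UN_Pp:
  "card (\<Union>m\<in>{k-j..<k}. (Pp u m :: ('n::finite set \<times> 'n set) set)) = (\<Sum>m\<in>{k-j..<k}. (CARD('n) choose u) * ((CARD('n) - u) choose m))"
proof -
  have "card (\<Union>m\<in>{k-j..<k}. (Pp u m :: ('n::finite set \<times> 'n set) set)) = (\<Sum>m\<in>{k-j..<k}. card (Pp u m :: ('n::finite set \<times> 'n set) set))"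
    by (rule card_UN_disjoint) (auto simp: Pp_def)
  also have "\<dots> = (\<Sum>m\<in>{k-j..<k}. (CARD('n) choose u) * ((CARD('n) - u) choose m))"
    unfolding Pp_def by (simp add: card_pairs)
  finally show ?thesis .
qed

lemma Vj_eq:
  assumes j: "1 \<le> j"
  shows "(Vj k j :: ('n::finite set \<times> 'n set \<times> bool) set) =
    (\<lambda>(A,U). (A,U,False)) ` (\<Union>m\<in>{k-j..<k}. Pp j m) \<union> (\<lambda>(A,U). (A,U,True)) ` (\<Union>m\<in>{k-j..<k}. Pp (j+1) m)"
proof (rule set_eqI)
  fix x :: "'n set \<times> 'n set \<times> bool"
  obtain A U s where x: "x = (A,U,s)" by (cases x) auto
  have fin: "finite U" by simp
  show "x \<in> Vj k j \<longleftrightarrow> x \<in> (\<lambda>(A,U). (A,U,False)) ` (\<Union>m\<in>{k-j..<k}. Pp j m) \<union> (\<lambda>(A,U). (A,U,True)) ` (\<Union>m\<in>{k-j..<k}. Pp (j+1) m)"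
  proof (cases s)
    case False
    have "x \<in> Vj k j \<longleftrightarrow> (A \<inter> U = {} \<and> card U = j \<and> card A \<in> {k-j..<k})"
      using j False fin by (auto simp: x Vj_def valid_def dimf_def card_eq_0_iff)
    also have "\<dots> \<longleftrightarrow> x \<in> (\<lambda>(A,U). (A,U,False)) ` (\<Union>m\<in>{k-j..<k}. Pp j m) \<union> (\<lambda>(A,U). (A,U,True)) ` (\<Union>m\<in>{k-j..<k}. Pp (j+1) m)"
      using False by (auto simp: x Pp_def image_iff)
    finally show ?thesis .
  next
    case True
    have "x \<in> Vj k j \<longleftrightarrow> (A \<inter> U = {} \<and> card U = j + 1 \<and> card A \<in> {k-j..<k})"
      using j True fin by (auto simp: x Vj_def valid_def dimf_def card_eq_0_iff)
    also have "\<dots> \<longleftrightarrow> x \<in> (\<lambda>(A,U). (A,U,False)) ` (\<Union>m\<in>{k-j..<k}. Pp j m) \<union> (\<lambda>(A,U). (A,U,True)) ` (\<Union>m\<in>{k-j..<k}. Pp (j+1) m)"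
      using True by (auto simp: x Pp_def image_iff)
    finally show ?thesis .
  qed
qed

lemma Vj_card:
  assumes j: "1 \<le> j"
  shows "card (Vj k j :: ('n::finite set \<times> 'n set \<times> bool) set) =
    (\<Sum>m\<in>{k-j..<k}. (CARD('n) choose j) * ((CARD('n) - j) choose m) + (CARD('n) choose (j+1)) * ((CARD('n) - (j+1)) choose m))"
proof -
  have i1: "inj_on (\<lambda>(A::'n set,U::'n set). (A,U,False)) X" for X by (auto simp: inj_on_def)
  have i2: "inj_on (\<lambda>(A::'n set,U::'n set). (A,U,True)) X" for X by (auto simp: inj_on_def)
  have "card (Vj k j :: ('n::finite set \<times> 'n set \<times> bool) set) =
     card ((\<lambda>(A,U). (A,U,False)) ` (\<Union>m\<in>{k-j..<k}. (Pp j m :: ('n set \<times> 'n set) set)))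
     + card ((\<lambda>(A,U). (A,U,True)) ` (\<Union>m\<in>{k-j..<k}. (Pp (j+1) m :: ('n set \<times> 'n set) set)))"
    unfolding Vj_eq[OF j] by (rule card_Un_disjoint) auto
  also have "\<dots> = (\<Sum>m\<in>{k-j..<k}. (CARD('n) choose j) * ((CARD('n) - j) choose m))
       + (\<Sum>m\<in>{k-j..<k}. (CARD('n) choose (j+1)) * ((CARD('n) - (j+1)) choose m))"
    by (simp only: card_image[OF i1] card_image[OF i2] card_UN_Pp)
  finally show ?thesis by (simp add: sum.distrib)
qed

lemma V0_card: "card (Vj k 0 :: ('n::finite set \<times> 'n set \<times> bool) set) = CARD('n) choose k"
proof -
  have eq: "(Vj k 0 :: ('n::finite set \<times> 'n set \<times> bool) set) = (\<lambda>A. (A,{},True)) ` {A. A \<subseteq> UNIV \<and> card A = k}"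
  proof (rule set_eqI)
    fix x :: "'n set \<times> 'n set \<times> bool"
    obtain A U s where x: "x = (A,U,s)" by (cases x) auto
    have fin: "finite U" by simp
    have "x \<in> Vj k 0 \<longleftrightarrow> (U = {} \<and> s \<and> card A = k)"
    proof
      assume "x \<in> Vj k 0"
      then have v: "valid k A U s" and d: "dimf U s = 0" by (auto simp: x Vj_def)
      show "U = {} \<and> s \<and> card A = k"
      proof (cases s)
        case False then show ?thesis using v d fin by (auto simp: valid_def dimf_def)
      next
        case True
        then have "card U \<le> 1" using d by (simp add: dimf_def)
        then show ?thesis using v True fin by (auto simp: valid_def)
      qed
    next
      assume "U = {} \<and> s \<and> card A = k" then show "x \<in> Vj k 0" by (auto simp: x Vj_def valid_def dimf_def)
    qed
    then show "x \<in> Vj k 0 \<longleftrightarrow> x \<in> (\<lambda>A. (A,{},True)) ` {A. A \<subseteq> UNIV \<and> card A = k}"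
      by (auto simp: x)
  qed
  have "inj (\<lambda>A::'n set. (A,{}::'n set,True))" by (auto simp: inj_def)
  then show ?thesis unfolding eq
    using n_subsets[of "UNIV::'n set" k] by (simp add: card_image inj_on_subset)
qed



lemma nat_id:
  assumes "j \<le> n" "m \<le> n"
  shows "(j+1)*((n choose j)*((n-j) choose m) + (n choose (j+1))*((n-(j+1)) choose m)) = (n choose j)*((n-j) choose m)*(n+1-m)"
proof -
  have h1: "(j+1)*(n choose (j+1)) = (n-j)*(n choose j)"
    using binomial_absorption[of j n] binomial_absorb_comp[of n j] by simp
  have h2: "(n-j-m)*((n-j) choose m) = (n-j)*((n-j-1) choose m)"
    using binomial_absorb_comp[of "n-j" m] by simp
  have "(j+1)*((n choose j)*((n-j) choose m) + (n choose (j+1))*((n-(j+1)) choose m))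
      = (j+1)*((n choose j)*((n-j) choose m)) + ((j+1)*(n choose (j+1)))*((n-j-1) choose m)"
    by (simp add: algebra_simps)
  also have "\<dots> = (j+1)*((n choose j)*((n-j) choose m)) + (n choose j)*((n-j)*((n-j-1) choose m))"
    unfolding h1 by (simp add: algebra_simps)
  also have "\<dots> = (j+1)*((n choose j)*((n-j) choose m)) + (n choose j)*((n-j-m)*((n-j) choose m))"
    unfolding h2 ..
  also have "\<dots> = (n choose j)*((n-j) choose m)*((j+1) + (n-j-m))"
    by (simp add: algebra_simps)
  also have "\<dots> = (n choose j)*((n-j) choose m)*(n+1-m)"
  proof (cases "m \<le> n - j")
    case True then show ?thesis using assms by (simp add: algebra_simps)
  next
    case False then show ?thesis by (simp add: binomial_eq_0)
  qed
  finally show ?thesis .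
qed

lemma real_id:
  assumes "j \<le> n" "m \<le> n"
  shows "real ((n choose j)*((n-j) choose m) + (n choose (j+1))*((n-(j+1)) choose m))
    = real (Suc n choose (j+1)) * (real ((n-j) choose m) * (real n - real m + 1) / (real n + 1))"
proof -
  have a: "real (j+1) * real ((n choose j)*((n-j) choose m) + (n choose (j+1))*((n-(j+1)) choose m))
     = real (n choose j) * real ((n-j) choose m) * real (n+1-m)"
    using arg_cong[OF nat_id[OF assms], of real] unfolding of_nat_mult .
  have b: "real (Suc n) * real (n choose j) = real (Suc n choose Suc j) * real (Suc j)"
    using arg_cong[OF Suc_times_binomial_eq[of n j], of real] unfolding of_nat_mult .
  have c: "real (n+1-m) = real n - real m + 1" using assms by simp
  define X where "X = real ((n choose j)*((n-j) choose m) + (n choose (j+1))*((n-(j+1)) choose m))"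
  define C where "C = real (Suc n choose (j+1))"
  define B where "B = real ((n-j) choose m)"
  have a': "real (j+1) * X = real (n choose j) * B * real (n+1-m)" using a unfolding X_def B_def .
  have b': "real (Suc n) * real (n choose j) = C * real (Suc j)" using b unfolding C_def Suc_eq_plus1 .
  have "real (j+1) * (real (Suc n) * X) = real (j+1) * (C * B * real (n+1-m))"
  proof -
    have "real (j+1) * (real (Suc n) * X) = real (Suc n) * (real (j+1) * X)" by (simp only: ac_simps)
    also have "\<dots> = (real (Suc n) * real (n choose j)) * B * real (n+1-m)" unfolding a' by (simp only: ac_simps)
    also have "\<dots> = real (j+1) * (C * B * real (n+1-m))" unfolding b' by (simp only: ac_simps Suc_eq_plus1)
    finally show ?thesis .
  qed
  then have "real (Suc n) * X = C * B * real (n+1-m)" by simp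
  then have "X = C * B * real (n+1-m) / real (Suc n)" by (simp add: field_simps)
  then show ?thesis unfolding X_def[symmetric] C_def[symmetric] B_def[symmetric] c by (simp add: field_simps)
qed

lemma int_range: "{max 0 (int k - int j)..int k - 1} = int ` {k-j..<k}"
proof (rule set_eqI, rule iffI)
  fix x assume "x \<in> {max 0 (int k - int j)..int k - 1}"
  then have "x \<ge> 0" "x \<ge> int k - int j" "x \<le> int k - 1" by auto
  then have "nat x \<in> {k-j..<k}" "x = int (nat x)" by auto
  then show "x \<in> int ` {k-j..<k}" by blast
next
  fix x assume "x \<in> int ` {k-j..<k}" then show "x \<in> {max 0 (int k - int j)..int k - 1}" by auto
qed

theorem theorem1p2:
  fixes k :: nat
  assumes "0 < k" and "k \<le> CARD('n::finite)"
  shows "(card (half_open_faces k 0 :: (real ^ 'n) set set) = CARD('n) choose k) \<and>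
         (\<forall>j. 1 \<le> j \<and> j \<le> CARD('n) \<longrightarrow>
           real (card (half_open_faces k j :: (real ^ 'n) set set)) =
           real (Suc (CARD('n)) choose (j + 1)) *
           (\<Sum>s = max 0 (int k - int j) .. int k - 1.
              real (CARD('n) - j choose nat s) * (real CARD('n) - real_of_int s + 1) / (real CARD('n) + 1)))"
proof (intro conjI allI impI)
  show "card (half_open_faces k 0 :: (real ^ 'n) set set) = CARD('n) choose k"
    by (simp add: faces_card V0_card)
next
  fix j assume j: "1 \<le> j \<and> j \<le> CARD('n)"
  let ?n = "CARD('n)"
  have "real (card (half_open_faces k j :: (real ^ 'n) set set))
     = real (\<Sum>m\<in>{k-j..<k}. (?n choose j) * ((?n - j) choose m) + (?n choose (j+1)) * ((?n - (j+1)) choose m))"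
    using j by (simp add: faces_card Vj_card)
  also have "\<dots> = (\<Sum>m\<in>{k-j..<k}. real (Suc ?n choose (j+1)) * (real ((?n-j) choose m) * (real ?n - real m + 1) / (real ?n + 1)))"
    unfolding of_nat_sum
  proof (rule sum.cong)
    fix m assume "m \<in> {k-j..<k}"
    then have "m \<le> ?n" using assms by auto
    then show "real ((?n choose j) * ((?n - j) choose m) + (?n choose (j+1)) * ((?n - (j+1)) choose m))
      = real (Suc ?n choose (j+1)) * (real ((?n-j) choose m) * (real ?n - real m + 1) / (real ?n + 1))"
      using j real_id by blast
  qed simp
  also have "\<dots> = real (Suc ?n choose (j+1)) * (\<Sum>m\<in>{k-j..<k}. real ((?n-j) choose m) * (real ?n - real m + 1) / (real ?n + 1))"
    by (simp add: sum_distrib_left)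
  also have "(\<Sum>m\<in>{k-j..<k}. real ((?n-j) choose m) * (real ?n - real m + 1) / (real ?n + 1))
     = (\<Sum>s = max 0 (int k - int j) .. int k - 1. real (?n - j choose nat s) * (real ?n - real_of_int s + 1) / (real ?n + 1))"
    unfolding int_range by (subst sum.reindex) (auto simp: inj_on_def)
  finally show "real (card (half_open_faces k j :: (real ^ 'n) set set)) =
           real (Suc (CARD('n)) choose (j + 1)) *
           (\<Sum>s = max 0 (int k - int j) .. int k - 1.
              real (CARD('n) - j choose nat s) * (real CARD('n) - real_of_int s + 1) / (real CARD('n) + 1))" .
qed


end
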